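(* Let $K$ be a field of characteristic $0$, $e\ge2$, and $A=[a_{i,j}]$, $B=[b_{i,j}]\in M_e(K)$, with indices taken in $\mathbb{Z}/e\mathbb{Z}$; write $A[i,j]=a_{i,j}$. For $d\in(\mathbb{Z}/e\mathbb{Z})^\times$, \[ (B\overset{d}{\ast}A)[i,j]=(A\overset{d^{-1}}{\ast}B)[-d^{-1}i,-d^{-1}j]\quad\text{for all } i,j. \] In particular $A\overset{-1}{\ast}B=B\overset{-1}{\ast}A$.
   Context: For $A=[a_{i,j}],B=[b_{i,j}]\in M_e(K)$ (indices modulo $e$) and $d\in(\mathbb{Z}/e\mathbb{Z})\setminus\{0\}$, the $d$-composition is $A\overset{d}{\ast}B=\big[\sum_{s=0}^{e-1}\sum_{t=0}^{e-1}a_{s,t}b_{ds+i,dt+j}\big]_{0\le i,j\le e-1}$. *)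

theory Defs
  imports "Jordan_Normal_Form.Matrix" "HOL-Number_Theory.Cong"
begin

text \<open>Indices of e x e matrices are 0..e-1, read modulo e. The residue of an
integer k modulo e, as a matrix index.\<close>
definition idx :: "nat \<Rightarrow> int \<Rightarrow> nat" where
  "idx e k = nat (k mod int e)"

definition dcomp :: "nat \<Rightarrow> int \<Rightarrow> 'a::comm_ring_1 mat \<Rightarrow> 'a mat \<Rightarrow> 'a mat" where
  "dcomp e d A B = mat e e (\<lambda>(i,j).
     (\<Sum>s<e. \<Sum>t<e. A $$ (s,t) *
        B $$ (idx e (d * int s + int i), idx e (d * int t + int j))))"

end

theory Submission
  imports Defs
begin

lemma idx_int: "e > 0 \<Longrightarrow> int (idx e k) = k mod int e"
  by (simp add: idx_def)

lemma idx_lt: "e > 0 \<Longrightarrow> idx e k < e"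
  unfolding idx_def by (simp add: nat_less_iff)

lemma idx_eqI: "e > 0 \<Longrightarrow> k mod int e = int s \<Longrightarrow> idx e k = s"
  unfolding idx_def by simp

lemma reidx:
  fixes G :: "nat \<Rightarrow> 'a::comm_monoid_add"
  assumes e: "e > 0" and dd: "[d * d' = 1] (mod int e)"
  shows "(\<Sum>u<e. G u) = (\<Sum>s<e. G (idx e (d * int s + c)))"
proof (rule sum.reindex_bij_witness[where i = "\<lambda>s. idx e (d * int s + c)"
      and j = "\<lambda>u. idx e (d' * (int u - c))"])
  fix u assume u: "u \<in> {..<e}"
  have **: "idx e (d * int (idx e (d' * (int u - c))) + c) = u" (is "?L = _")
  proof -
  have "(d * ((d' * (int u - c)) mod int e) + c) mod int e = (d * d' * (int u - c) + c) mod int e"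
  proof -
    have "[d * ((d' * (int u - c)) mod int e) + c = d * (d' * (int u - c)) + c] (mod int e)"
      by (intro cong_add cong_mult cong_refl) (simp_all add: cong_def)
    then show ?thesis unfolding cong_def by (simp add: mult.assoc)
  qed
  also have "\<dots> = (1 * (int u - c) + c) mod int e"
  proof -
    have "[d * d' * (int u - c) + c = 1 * (int u - c) + c] (mod int e)"
      by (intro cong_add cong_mult dd cong_refl)
    then show ?thesis unfolding cong_def .
  qed
  also have "\<dots> = int u" using u by simp
  finally show "?L = u"
    using e by (intro idx_eqI) (simp_all add: idx_int)
  qed
  then show "idx e (d * int (idx e (d' * (int u - c))) + c) = u" .
  from ** show "G (idx e (d * int (idx e (d' * (int u - c))) + c)) = G u" by simp
  show "idx e (d' * (int u - c)) \<in> {..<e}" using e idx_lt by blast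
next
  fix s assume s: "s \<in> {..<e}"
  have "[d' * ((d * int s + c) mod int e - c) = d' * (d * int s + c - c)] (mod int e)"
    by (intro cong_mult cong_diff cong_refl) (simp add: cong_def)
  then have "(d' * ((d * int s + c) mod int e - c)) mod int e = (d' * (d * int s + c - c)) mod int e"
    unfolding cong_def .
  also have "\<dots> = (d * d' * int s) mod int e" by (simp add: algebra_simps)
  also have "\<dots> = (1 * int s) mod int e"
  proof -
    have "[d * d' * int s = 1 * int s] (mod int e)"
      by (intro cong_mult dd cong_refl)
    then show ?thesis unfolding cong_def .
  qed
  also have "\<dots> = int s" using s by simp
  finally show "idx e (d' * (int (idx e (d * int s + c)) - c)) = s"
    using e by (intro idx_eqI) (simp_all add: idx_int)
  show "idx e (d * int s + c) \<in> {..<e}" using e idx_lt by blast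
qed

lemma idx_back:
  assumes e: "e > 0" and dd: "[d * d' = 1] (mod int e)" and s: "s < e"
  shows "idx e (d' * int (idx e (d * int s + c)) + int (idx e (- (d' * c)))) = s"
proof -
  have "(d' * ((d * int s + c) mod int e) + (- d' * c) mod int e) mod int e
        = (d' * (d * int s + c) + (- d' * c)) mod int e"
  proof -
    have "[d' * ((d * int s + c) mod int e) + (- d' * c) mod int e = d' * (d * int s + c) + (- d' * c)] (mod int e)"
      by (intro cong_add cong_mult cong_refl) (simp_all add: cong_def)
    then show ?thesis unfolding cong_def .
  qed
  also have "\<dots> = (d * d' * int s) mod int e" by (simp add: algebra_simps)
  also have "\<dots> = (1 * int s) mod int e"
  proof -
    have "[d * d' * int s = 1 * int s] (mod int e)"
      by (intro cong_mult dd cong_refl)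
    then show ?thesis unfolding cong_def .
  qed
  also have "\<dots> = int s" using s by simp
  finally show ?thesis using e by (intro idx_eqI) (simp_all add: idx_int)
qed

lemma gen:
  fixes A B :: "'a::comm_ring_1 mat"
  assumes e: "e > 0" and dd: "[d * d' = 1] (mod int e)" and i: "i < e" and j: "j < e"
  shows "dcomp e d B A $$ (i,j) =
            dcomp e d' A B $$ (idx e (- d' * int i), idx e (- d' * int j))"
proof -
  let ?i = "idx e (- d' * int i)" and ?j = "idx e (- d' * int j)"
  have "dcomp e d' A B $$ (?i, ?j) = (\<Sum>u<e. \<Sum>v<e. A $$ (u,v) *
        B $$ (idx e (d' * int u + int ?i), idx e (d' * int v + int ?j)))"
    unfolding dcomp_def using e idx_lt by simp
  also have "\<dots> = (\<Sum>s<e. \<Sum>v<e. A $$ (idx e (d * int s + int i),v) *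
        B $$ (idx e (d' * int (idx e (d * int s + int i)) + int ?i), idx e (d' * int v + int ?j)))"
    by (rule reidx[OF e dd])
  also have "\<dots> = (\<Sum>s<e. \<Sum>t<e. A $$ (idx e (d * int s + int i),idx e (d * int t + int j)) *
        B $$ (idx e (d' * int (idx e (d * int s + int i)) + int ?i),
              idx e (d' * int (idx e (d * int t + int j)) + int ?j)))"
    by (rule sum.cong[OF refl], rule reidx[OF e dd])
  also have "\<dots> = (\<Sum>s<e. \<Sum>t<e. B $$ (s,t) * A $$ (idx e (d * int s + int i),idx e (d * int t + int j)))"
  proof (intro sum.cong refl)
    fix s t assume "s \<in> {..<e}" "t \<in> {..<e}"
    then have h1: "idx e (d' * int (idx e (d * int s + int i)) + int ?i) = s"
      and h2: "idx e (d' * int (idx e (d * int t + int j)) + int ?j) = t"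
      using idx_back[OF e dd, of s "int i"] idx_back[OF e dd, of t "int j"] by simp_all
    show "A $$ (idx e (d * int s + int i),idx e (d * int t + int j)) *
        B $$ (idx e (d' * int (idx e (d * int s + int i)) + int ?i),
              idx e (d' * int (idx e (d * int t + int j)) + int ?j))
       = B $$ (s,t) * A $$ (idx e (d * int s + int i),idx e (d * int t + int j))"
      unfolding h1 h2 by (rule mult.commute)
  qed
  also have "\<dots> = dcomp e d B A $$ (i,j)"
    unfolding dcomp_def using i j by simp
  finally show ?thesis by simp
qed

theorem proposition3p1:
  fixes A B :: "'a::field_char_0 mat" and e :: nat and d d' :: int
  assumes "e \<ge> 2"
    and "A \<in> carrier_mat e e" and "B \<in> carrier_mat e e"
    and "coprime d (int e)"
    and "[d * d' = 1] (mod int e)"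
  shows "(\<forall>i<e. \<forall>j<e.
            dcomp e d B A $$ (i,j) =
            dcomp e d' A B $$ (idx e (- d' * int i), idx e (- d' * int j)))
         \<and> dcomp e (-1) A B = dcomp e (-1) B A"
proof
  have e: "e > 0" using assms(1) by simp
  show "\<forall>i<e. \<forall>j<e.
            dcomp e d B A $$ (i,j) =
            dcomp e d' A B $$ (idx e (- d' * int i), idx e (- d' * int j))"
    using gen[OF e assms(5)] by blast
  have m1: "[(-1) * (-1) = 1] (mod int e)" by (simp add: cong_def)
  show "dcomp e (-1) A B = dcomp e (-1) B A"
  proof (rule eq_matI)
    fix i j assume i: "i < dim_row (dcomp e (-1) B A)" and j: "j < dim_col (dcomp e (-1) B A)"
    have i': "i < e" and j': "j < e" using i j by (simp_all add: dcomp_def)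
    have ii: "idx e (- (-1) * int i) = i" using e i' by (intro idx_eqI) simp_all
    have jj: "idx e (- (-1) * int j) = j" using e j' by (intro idx_eqI) simp_all
    show "dcomp e (-1) A B $$ (i,j) = dcomp e (-1) B A $$ (i,j)"
      using gen[OF e m1 i' j', of A B] ii jj by simp
  qed (simp_all add: dcomp_def)
qed

end
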